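(* For every non-negative integer $n$, $$\sum_{k=1}^{2n}\frac{(-1)^k}{k}\binom{2n}{k}\binom{2n+1+k}{k}=-2H_{2n},$$ and $$\sum_{k=1}^{n}\frac{(-1)^k}{k}\binom{n}{k}\binom{n+1+k}{k}H_k=2\left(\sum_{k=1}^n\frac{(-1)^k}{k^2}+\frac{(-1)^n}{n+1}H_n\right).$$
   Context: $H_n=\sum_{k=1}^n \frac{1}{k}$ denotes the $n$th harmonic number, with $H_0=0$; empty sums are $0$. *)

theory Defs
  imports "HOL-Analysis.Analysis"
begin

end

theory Submission
  imports Defs
begin
lemma alt_pascal:
  fixes a :: "nat \<Rightarrow> real"
  shows "(\<Sum>i\<le>Suc P. (-1)^i * real (Suc P choose i) * a i)
       = (\<Sum>i\<le>P. (-1)^i * real (P choose i) * (a i - a (Suc i)))"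
proof -
  have "(\<Sum>i\<le>Suc P. (-1)^i * real (Suc P choose i) * a i)
      = a 0 + (\<Sum>i\<le>P. (-1)^(Suc i) * real (Suc P choose Suc i) * a (Suc i))"
    by (subst sum.atMost_Suc_shift) simp
  also have "\<dots> = a 0 + (\<Sum>i\<le>P. (-1)^(Suc i) * real (P choose Suc i) * a (Suc i))
      - (\<Sum>i\<le>P. (-1)^i * real (P choose i) * a (Suc i))"
  proof -
    have "(-1)^(Suc i) * real (Suc P choose Suc i) * a (Suc i)
       = (-1)^(Suc i) * real (P choose Suc i) * a (Suc i) - (-1)^i * real (P choose i) * a (Suc i)" for i
      by (simp add: algebra_simps)
    then show ?thesis by (simp only: sum_subtractf)
  qed
  also have "a 0 + (\<Sum>i\<le>P. (-1)^(Suc i) * real (P choose Suc i) * a (Suc i))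
      = (\<Sum>i\<le>Suc P. (-1)^i * real (P choose i) * a i)"
    by (subst sum.atMost_Suc_shift) simp
  also have "\<dots> = (\<Sum>i\<le>P. (-1)^i * real (P choose i) * a i)"
    by simp
  finally show ?thesis by (simp add: sum_subtractf algebra_simps)
qed

lemma gen_alt:
  "(\<Sum>i\<le>P. (-1)^i * real (P choose i) * real ((Q+i) choose R))
     = (-1)^P * (if P \<le> R then real (Q choose (R-P)) else 0)"
proof (induction P arbitrary: Q)
  case 0
  then show ?case by simp
next
  case (Suc P)
  have "(\<Sum>i\<le>Suc P. (-1)^i * real (Suc P choose i) * real ((Q+i) choose R))
     = (\<Sum>i\<le>P. (-1)^i * real (P choose i) * (real ((Q+i) choose R) - real ((Suc Q+i) choose R)))"
    by (subst alt_pascal) simp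
  also have "\<dots> = (\<Sum>i\<le>P. (-1)^i * real (P choose i) * real ((Q+i) choose R))
      - (\<Sum>i\<le>P. (-1)^i * real (P choose i) * real ((Suc Q+i) choose R))"
    by (simp add: sum_subtractf algebra_simps)
  also have "\<dots> = (-1)^P * ((if P \<le> R then real (Q choose (R-P)) else 0)
       - (if P \<le> R then real (Suc Q choose (R-P)) else 0))"
    by (simp only: Suc.IH) (simp add: algebra_simps)
  also have "\<dots> = (-1)^(Suc P) * (if Suc P \<le> R then real (Q choose (R - Suc P)) else 0)"
  proof (cases "Suc P \<le> R")
    case True
    then have "R - P = Suc (R - Suc P)" by simp
    then show ?thesis using True by simp
  next
    case False
    then show ?thesis by (cases "P = R") auto
  qed
  finally show ?case .
qed

lemma harm_binom: "(harm k :: real) = (\<Sum>j=1..k. - ((-1)^j * real (k choose j) / real j))"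
proof (induction k)
  case 0
  then show ?case by (simp add: harm_def)
next
  case (Suc k)
  have alt: "(\<Sum>j\<le>Suc k. (-1)^j * real (Suc k choose j)) = 0"
    using gen_alt[of "Suc k" 0 0] by simp
  have "(\<Sum>j=1..Suc k. - ((-1)^j * real (Suc k choose j) / real j))
      = (\<Sum>j=1..Suc k. - ((-1)^j * real (k choose j) / real j))
        + (\<Sum>j=1..Suc k. - ((-1)^j * real (Suc k choose j) / real (Suc k)))"
  proof -
    have "- ((-1)^j * real (Suc k choose j) / real j) = - ((-1)^j * real (k choose j) / real j)
         + - ((-1)^j * real (Suc k choose j) / real (Suc k))" if jin: "j \<in> {1..Suc k}" for j
    proof -
      obtain i where j: "j = Suc i" using jin by (cases j) (auto simp: atLeastAtMost_iff)
      have "real (Suc k choose Suc i) * real (Suc i) = real (Suc k) * real (k choose i)"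
        using Suc_times_binomial_eq[of k i] by (metis of_nat_mult)
      then have e1: "real (k choose i) / real (Suc i) = real (Suc k choose Suc i) / real (Suc k)"
        by (simp add: field_simps del: binomial_Suc_Suc of_nat_Suc)
      have e2: "real (Suc k choose Suc i) = real (k choose i) + real (k choose Suc i)"
        by simp
      have "- ((-1)^j * real (Suc k choose j) / real j) = - ((-1)^j * real (k choose j) / real j)
         - (-1)^j * (real (k choose i) / real (Suc i))"
        unfolding j by (simp only: e2) (simp add: add_divide_distrib diff_divide_distrib algebra_simps del: binomial_Suc_Suc)
      then show ?thesis unfolding e1 j by simp
    qed
    then show ?thesis unfolding sum.distrib[symmetric] by (intro sum.cong) auto
  qed
  also have "(\<Sum>j=1..Suc k. - ((-1)^j * real (k choose j) / real j))
      = (\<Sum>j=1..k. - ((-1)^j * real (k choose j) / real j))" by simp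
  also have "(\<Sum>j=1..Suc k. - ((-1)^j * real (Suc k choose j) / real (Suc k)))
      = - ((\<Sum>j=1..Suc k. (-1)^j * real (Suc k choose j)) / real (Suc k))"
    by (simp only: sum_divide_distrib sum_negf)
  also have "(\<Sum>j=1..Suc k. (-1)^j * real (Suc k choose j)) = -1"
  proof -
    have "(\<Sum>j\<le>Suc k. (-1)^j * real (Suc k choose j)) = 1 + (\<Sum>j=1..Suc k. (-1)^j * real (Suc k choose j))"
      by (simp add: atMost_atLeast0 sum.atLeast_Suc_atMost)
    then show ?thesis using alt by simp
  qed
  finally show ?case using Suc.IH by (simp add: harm_Suc field_simps)
qed


lemma choose_swap: "(a + b) choose a = (a + b) choose (b::nat)"
  using binomial_symmetric[of a "a+b"] by simp

lemma Lsum: "(\<Sum>k\<le>N. (-1)^k * real (N choose k) * real ((N+k) choose k)) = (-1)^N"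
  using gen_alt[of N N N] by (simp add: choose_swap)

lemma L0: "(\<Sum>k\<le>Suc N. (-1)^k * real (Suc N choose k) * real ((N+k) choose k)) = 0"
  using gen_alt[of "Suc N" N N] by (simp add: choose_swap)

lemma absorb1: "k \<le> Suc m \<Longrightarrow> real (m choose k) = (real (Suc m) - real k) / real (Suc m) * real (Suc m choose k)"
proof -
  assume "k \<le> Suc m"
  have "(Suc m - k) * (Suc m choose k) = Suc m * (m choose k)"
    using binomial_absorb_comp[of "Suc m" k] by simp
  then have "(real (Suc m) - real k) * real (Suc m choose k) = real (Suc m) * real (m choose k)"
    using \<open>k \<le> Suc m\<close> by (metis of_nat_diff of_nat_mult)
  then show ?thesis by (simp add: field_simps del: of_nat_Suc)
qed

lemma absorb2: "real (Suc a + k choose k) = (real (Suc a) + real k) / real (Suc a) * real (a + k choose k)"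
proof -
  have "(Suc a + k - k) * (Suc a + k choose k) = (Suc a + k) * ((Suc a + k - 1) choose k)"
    by (rule binomial_absorb_comp)
  then have "real (Suc a) * real (Suc a + k choose k) = (real (Suc a) + real k) * real (a + k choose k)"
    by (metis add_diff_cancel_right' diff_Suc_1 add_Suc of_nat_add of_nat_mult)
  then show ?thesis by (simp add: field_simps del: of_nat_Suc)
qed

lemma sum_from1: "(\<Sum>k\<le>n. f k) = f 0 + (\<Sum>k=1..n. f k)" for f :: "nat \<Rightarrow> real"
  by (simp add: atMost_atLeast0 sum.atLeast_Suc_atMost)

lemma Vsum: "(\<Sum>k=1..N. (-1)^k / real k * real (N choose k) * real ((N+k) choose k)) = - 2 * (harm N :: real)"
proof (induction N)
  case 0
  then show ?case by (simp add: harm_def)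
next
  case (Suc N)
  have pt: "(-1)^k / real k * real (Suc N choose k) * real ((Suc N+k) choose k)
      = (-1)^k / real k * real (N choose k) * real ((N+k) choose k)
        + 2 / real (Suc N) * ((-1)^k * real (Suc N choose k) * real ((N+k) choose k))"
    if "k \<in> {1..Suc N}" for k
  proof -
    from that have k: "k \<le> Suc N" "k \<ge> 1" by auto
    show ?thesis unfolding absorb1[OF k(1)] absorb2[of N k]
      using k by (simp add: field_simps del: of_nat_Suc)
  qed
  have "(\<Sum>k=1..Suc N. (-1)^k / real k * real (Suc N choose k) * real ((Suc N+k) choose k))
     = (\<Sum>k=1..Suc N. (-1)^k / real k * real (N choose k) * real ((N+k) choose k))
       + 2 / real (Suc N) * (\<Sum>k=1..Suc N. (-1)^k * real (Suc N choose k) * real ((N+k) choose k))"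
    by (simp only: sum.cong[OF refl pt] sum.distrib sum_distrib_left)
  also have "(\<Sum>k=1..Suc N. (-1)^k / real k * real (N choose k) * real ((N+k) choose k))
     = (\<Sum>k=1..N. (-1)^k / real k * real (N choose k) * real ((N+k) choose k))" by simp
  also have "(\<Sum>k=1..Suc N. (-1)^k * real (Suc N choose k) * real ((N+k) choose k)) = -1"
    using L0[of N] sum_from1[of "\<lambda>k. (-1)^k * real (Suc N choose k) * real ((N+k) choose k)"] by simp
  finally show ?case using Suc.IH by (simp add: harm_Suc field_simps del: of_nat_Suc)
qed


lemma Dsum:
  assumes "j \<le> N"
  shows "(\<Sum>k\<le>N. (-1)^k * real (N choose k) * real ((N+k) choose k) * real (k choose j))
       = (-1)^N * real (N choose j) * real ((N+j) choose j)"
proof -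
  let ?F = "\<lambda>k. (-1)^k * real (N choose k) * real ((N+k) choose k) * real (k choose j)"
  have "(\<Sum>k\<le>N. ?F k) = (\<Sum>k\<in>{j..N}. ?F k)"
    by (rule sum.mono_neutral_right) auto
  also have "\<dots> = (\<Sum>i\<in>{0..N-j}. ?F (i+j))"
    using sum.shift_bounds_cl_nat_ivl[of ?F 0 j "N-j"] assms by simp
  also have "\<dots> = (\<Sum>i\<le>N-j. ((-1)^j * real (N choose j)) *
        ((-1)^i * real ((N-j) choose i) * real ((N+j+i) choose N)))"
  proof (unfold atMost_atLeast0, rule sum.cong[OF refl])
    fix i assume "i \<in> {0..N-j}"
    then have i: "i + j \<le> N" using assms by auto
    have c1: "(N choose (i+j)) * ((i+j) choose j) = (N choose j) * ((N-j) choose i)"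
      using choose_mult[of j "i+j" N] i by simp
    have c2: "(N + (i+j)) choose (i+j) = (N+j+i) choose N"
      using choose_swap[of "i+j" N] by (simp add: add_ac)
    have "?F (i+j) = (-1)^(i+j) * (real (N choose (i+j)) * real ((i+j) choose j)) * real ((N + (i+j)) choose (i+j))"
      by simp
    also have "\<dots> = (-1)^(i+j) * real ((N choose j) * ((N-j) choose i)) * real ((N+j+i) choose N)"
      by (simp only: c2 flip: c1 of_nat_mult)
    finally show "?F (i+j) = ((-1)^j * real (N choose j)) *
        ((-1)^i * real ((N-j) choose i) * real ((N+j+i) choose N))"
      by (simp add: power_add)
  qed
  also have "\<dots> = ((-1)^j * real (N choose j)) * ((-1)^(N-j) * real ((N+j) choose j))"
    using gen_alt[of "N-j" "N+j" N] assms by (simp add: sum_distrib_left[symmetric] add_ac)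
  also have "\<dots> = ((-1)^(j + (N-j))) * real (N choose j) * real ((N+j) choose j)"
    by (simp add: power_add)
  finally show ?thesis using assms by simp
qed


lemma Usum: "(\<Sum>k\<le>N. (-1)^k * real (N choose k) * real ((N+k) choose k) * harm k)
     = 2 * (-1)^N * (harm N :: real)"
proof -
  let ?g = "\<lambda>k. (-1)^k * real (N choose k) * real ((N+k) choose k)"
  have h: "harm k = (\<Sum>j=1..N. - ((-1)^j * real (k choose j) / real j))" if "k \<le> N" for k
  proof -
    have "(\<Sum>j=1..N. - ((-1)^j * real (k choose j) / real j))
        = (\<Sum>j=1..k. - ((-1)^j * real (k choose j) / real j))"
      by (rule sum.mono_neutral_right) (use that in auto)
    then show ?thesis by (simp add: harm_binom)
  qed
  have "(\<Sum>k\<le>N. ?g k * harm k) = (\<Sum>k\<le>N. \<Sum>j=1..N. ?g k * - ((-1)^j * real (k choose j) / real j))"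
    by (rule sum.cong[OF refl]) (simp add: h sum_distrib_left)
  also have "\<dots> = (\<Sum>j=1..N. \<Sum>k\<le>N. ?g k * - ((-1)^j * real (k choose j) / real j))"
    by (rule sum.swap)
  also have "\<dots> = (\<Sum>j=1..N. - ((-1)^j / real j) * (\<Sum>k\<le>N. ?g k * real (k choose j)))"
    by (rule sum.cong[OF refl]) (simp add: sum_distrib_left algebra_simps)
  also have "\<dots> = (\<Sum>j=1..N. - ((-1)^j / real j) * ((-1)^N * real (N choose j) * real ((N+j) choose j)))"
    by (rule sum.cong[OF refl]) (simp add: Dsum)
  also have "\<dots> = (-1)^(Suc N) * (\<Sum>j=1..N. (-1)^j / real j * real (N choose j) * real ((N+j) choose j))"
    by (simp add: sum_distrib_left algebra_simps)
  also have "\<dots> = 2 * (-1)^N * harm N"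
    unfolding Vsum by simp
  finally show ?thesis by simp
qed

lemma pt_gen:
  assumes "1 \<le> k" "k \<le> Suc m"
  shows "(-1)^k / real k * real (Suc m choose k) * real ((Suc (Suc m) + k) choose k)
      = (-1)^k / real k * real (m choose k) * real ((Suc m + k) choose k)
        + (real (Suc m) + real (Suc (Suc m))) / (real (Suc m) * real (Suc (Suc m))) *
          ((-1)^k * real (Suc m choose k) * real ((Suc m + k) choose k))"
  unfolding absorb1[OF assms(2)] absorb2[of "Suc m" k]
  using assms by (simp add: field_simps del: of_nat_Suc)

lemma arithS:
  fixes a b h s :: real
  assumes "a \<noteq> 0" "b \<noteq> 0"
  shows "(-2*h - (1-s)/a) + (a+b)/(a*b) * (-s - 1) = -2*(h + inverse a) - (1 - -s)/b"
  using assms by (simp add: field_simps)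

lemma arithT:
  fixes a b h s Q :: real
  assumes "a \<noteq> 0" "b \<noteq> 0"
  shows "2*(Q + s/a*h) + (a+b)/(a*b) * (2*(-s)*(h + inverse a)) = 2*((Q + (-s)/a^2) + (-s)/b*(h + inverse a))"
  using assms by (simp add: field_simps power2_eq_square)

lemma Sgen: "(\<Sum>k=1..m. (-1::real)^k / real k * real (m choose k) * real ((m+1+k) choose k))
     = - 2 * harm m - (1 - (-1)^m) / real (m+1)"
proof (induction m)
  case 0
  then show ?case by (simp add: harm_def)
next
  case (Suc m)
  have "(\<Sum>k=1..Suc m. (-1::real)^k / real k * real (Suc m choose k) * real ((Suc m+1+k) choose k))
     = (\<Sum>k=1..Suc m. (-1)^k / real k * real (m choose k) * real ((Suc m + k) choose k)
        + (real (Suc m) + real (Suc (Suc m))) / (real (Suc m) * real (Suc (Suc m))) *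
          ((-1)^k * real (Suc m choose k) * real ((Suc m + k) choose k)))"
    (is "sum ?f _ = sum ?g _")
  proof (rule sum.cong[OF refl])
    fix k assume "k \<in> {1..Suc m}"
    then show "?f k = ?g k" using pt_gen[of k m] by (simp add: add_ac)
  qed
  also have "\<dots> = (\<Sum>k=1..Suc m. (-1)^k / real k * real (m choose k) * real ((Suc m + k) choose k))
        + (real (Suc m) + real (Suc (Suc m))) / (real (Suc m) * real (Suc (Suc m))) *
          (\<Sum>k=1..Suc m. (-1)^k * real (Suc m choose k) * real ((Suc m + k) choose k))"
    by (simp only: sum.distrib sum_distrib_left)
  also have "(\<Sum>k=1..Suc m. (-1)^k / real k * real (m choose k) * real ((Suc m + k) choose k))
     = (\<Sum>k=1..m. (-1)^k / real k * real (m choose k) * real ((m+1+k) choose k))"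
    by simp
  also have "(\<Sum>k=1..Suc m. (-1)^k * real (Suc m choose k) * real ((Suc m + k) choose k)) = (-1)^(Suc m) - 1"
    using Lsum[of "Suc m"] sum_from1[of "\<lambda>k. (-1)^k * real (Suc m choose k) * real ((Suc m+k) choose k)"] by simp
  also have "(\<Sum>k=1..m. (-1::real)^k / real k * real (m choose k) * real ((m+1+k) choose k))
        + (real (Suc m) + real (Suc (Suc m))) / (real (Suc m) * real (Suc (Suc m))) * ((-1)^(Suc m) - 1)
      = - 2 * harm (Suc m) - (1 - (-1)^(Suc m)) / real (Suc m + 1)"
  proof -
    have e: "(-1::real)^(Suc m) = - ((-1)^m)" by simp
    have e2: "Suc m + 1 = Suc (Suc m)" by simp
    have e4: "m + 1 = Suc m" by simp
    show ?thesis unfolding Suc.IH unfolding e e2 e4 harm_Suc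
      by (rule arithS) simp_all
  qed
  finally show ?case .
qed

lemma Tgen: "(\<Sum>k=1..n. (-1::real)^k / real k * real (n choose k) * real ((n+1+k) choose k) * harm k)
     = 2 * ((\<Sum>k=1..n. (-1::real)^k / (real k)^2) + (-1::real)^n / real (n+1) * harm n)"
proof (induction n)
  case 0
  then show ?case by (simp add: harm_def)
next
  case (Suc m)
  have "(\<Sum>k=1..Suc m. (-1::real)^k / real k * real (Suc m choose k) * real ((Suc m+1+k) choose k) * harm k)
     = (\<Sum>k=1..Suc m. (-1)^k / real k * real (m choose k) * real ((Suc m + k) choose k) * harm k
        + (real (Suc m) + real (Suc (Suc m))) / (real (Suc m) * real (Suc (Suc m))) *
          ((-1)^k * real (Suc m choose k) * real ((Suc m + k) choose k) * harm k))"
    (is "sum ?f _ = sum ?g _")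
  proof (rule sum.cong[OF refl])
    fix k assume "k \<in> {1..Suc m}"
    then show "?f k = ?g k" using pt_gen[of k m] by (simp add: add_ac algebra_simps)
  qed
  also have "\<dots> = (\<Sum>k=1..Suc m. (-1)^k / real k * real (m choose k) * real ((Suc m + k) choose k) * harm k)
        + (real (Suc m) + real (Suc (Suc m))) / (real (Suc m) * real (Suc (Suc m))) *
          (\<Sum>k=1..Suc m. (-1)^k * real (Suc m choose k) * real ((Suc m + k) choose k) * harm k)"
    by (simp only: sum.distrib sum_distrib_left)
  also have "(\<Sum>k=1..Suc m. (-1)^k / real k * real (m choose k) * real ((Suc m + k) choose k) * harm k)
     = (\<Sum>k=1..m. (-1)^k / real k * real (m choose k) * real ((m+1+k) choose k) * harm k)"
    by simp
  also have "(\<Sum>k=1..Suc m. (-1)^k * real (Suc m choose k) * real ((Suc m + k) choose k) * harm k)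
      = 2 * (-1)^(Suc m) * harm (Suc m)"
    using Usum[of "Suc m"] sum_from1[of "\<lambda>k. (-1)^k * real (Suc m choose k) * real ((Suc m+k) choose k) * harm k"]
    by (simp add: harm_def)
  also have "(\<Sum>k=1..m. (-1::real)^k / real k * real (m choose k) * real ((m+1+k) choose k) * harm k)
        + (real (Suc m) + real (Suc (Suc m))) / (real (Suc m) * real (Suc (Suc m))) * (2 * (-1)^(Suc m) * harm (Suc m))
      = 2 * ((\<Sum>k=1..Suc m. (-1::real)^k / (real k)^2) + (-1::real)^(Suc m) / real (Suc m+1) * harm (Suc m))"
  proof -
    have e: "(-1::real)^(Suc m) = - ((-1)^m)" by simp
    have e2: "Suc m + 1 = Suc (Suc m)" by simp
    have e4: "m + 1 = Suc m" by simp
    have e3: "(\<Sum>k=1..Suc m. (-1::real)^k / (real k)^2) = (\<Sum>k=1..m. (-1::real)^k / (real k)^2) + (-1)^(Suc m) / (real (Suc m))^2"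
      by simp
    show ?thesis unfolding Suc.IH e3 unfolding e e2 e4 harm_Suc
      by (rule arithT) simp_all
  qed
  finally show ?case .
qed

theorem lemma3p1:
  fixes n :: nat
  shows "((\<Sum>k=1..2*n. (-1::real)^k / real k * real ((2*n) choose k) * real ((2*n+1+k) choose k))
           = - 2 * (harm (2*n) :: real)) \<and>
         ((\<Sum>k=1..n. (-1::real)^k / real k * real (n choose k) * real ((n+1+k) choose k) * (harm k :: real))
           = 2 * ((\<Sum>k=1..n. (-1::real)^k / (real k)^2) + (-1::real)^n / real (n+1) * harm n))"
proof
  show "(\<Sum>k=1..2*n. (-1::real)^k / real k * real ((2*n) choose k) * real ((2*n+1+k) choose k))
           = - 2 * (harm (2*n) :: real)"
    using Sgen[of "2*n"] by simp
  show "(\<Sum>k=1..n. (-1::real)^k / real k * real (n choose k) * real ((n+1+k) choose k) * (harm k :: real))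
           = 2 * ((\<Sum>k=1..n. (-1::real)^k / (real k)^2) + (-1::real)^n / real (n+1) * harm n)"
    by (rule Tgen)
qed

end
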